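(* Let $\mathcal G$ be a doubly connected molecular graph and let $b_0$ be a redundant blue solid edge of $\mathcal G$. Let $b$ be a diffusive edge of $\mathcal G$ joining molecules $\mathcal M_1$ and $\mathcal M_2$, and let $\mathcal M$ be another molecule of $\mathcal G$ (distinct from $\mathcal M_1,\mathcal M_2$). Form a new graph by removing $b$ and adding two diffusive edges, $b_1$ joining $\mathcal M_1$ and $\mathcal M$ and $b_2$ joining $\mathcal M$ and $\mathcal M_2$. Then $b_0$ is still redundant in the new graph.
   Context: A molecular graph is a finite multigraph whose vertices are called molecules and each of whose edges joins two distinct molecules and is either a diffusive edge or a blue solid edge (parallel edges are allowed). A molecular graph is doubly connected if there exist two disjoint sets of edges, $\mathcal B_{black}$ consisting only of diffusive edges and $\mathcal B_{blue}$ consisting only of blue solid or diffusive edges, such that each of $\mathcal B_{black}$ and $\mathcal B_{blue}$ contains a spanning tree of the set of all molecules. A blue solid edge $e$ of a doubly connected graph is redundant if the graph obtained by deleting $e$ is still doubly connected. *)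

theory Defs
  imports Main
begin

datatype edge_kind = Diffusive | BlueSolid

definition joins :: "('e \<Rightarrow> 'v \<times> 'v) \<Rightarrow> 'e \<Rightarrow> 'v \<Rightarrow> 'v \<Rightarrow> bool" where
  "joins ends e u v \<longleftrightarrow> ends e = (u, v) \<or> ends e = (v, u)"

definition molecular_graph :: "'v set \<Rightarrow> 'e set \<Rightarrow> ('e \<Rightarrow> 'v \<times> 'v) \<Rightarrow> bool" where
  "molecular_graph V E ends \<longleftrightarrow> finite V \<and> finite E \<and>
     (\<forall>e\<in>E. fst (ends e) \<in> V \<and> snd (ends e) \<in> V \<and> fst (ends e) \<noteq> snd (ends e))"

definition adj :: "'e set \<Rightarrow> ('e \<Rightarrow> 'v \<times> 'v) \<Rightarrow> 'v \<Rightarrow> 'v \<Rightarrow> bool" where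
  "adj F ends u v \<longleftrightarrow> (\<exists>e\<in>F. joins ends e u v)"

definition connects :: "'v set \<Rightarrow> 'e set \<Rightarrow> ('e \<Rightarrow> 'v \<times> 'v) \<Rightarrow> bool" where
  "connects V F ends \<longleftrightarrow> (\<forall>u\<in>V. \<forall>v\<in>V. (adj F ends)\<^sup>*\<^sup>* u v)"

definition spanning_tree :: "'v set \<Rightarrow> 'e set \<Rightarrow> ('e \<Rightarrow> 'v \<times> 'v) \<Rightarrow> bool" where
  "spanning_tree V T ends \<longleftrightarrow> connects V T ends \<and> (\<forall>e\<in>T. \<not> connects V (T - {e}) ends)"

definition contains_spanning_tree :: "'v set \<Rightarrow> 'e set \<Rightarrow> ('e \<Rightarrow> 'v \<times> 'v) \<Rightarrow> bool" where
  "contains_spanning_tree V F ends \<longleftrightarrow> (\<exists>T\<subseteq>F. spanning_tree V T ends)"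

definition doubly_connected ::
  "'v set \<Rightarrow> 'e set \<Rightarrow> ('e \<Rightarrow> 'v \<times> 'v) \<Rightarrow> ('e \<Rightarrow> edge_kind) \<Rightarrow> bool" where
  "doubly_connected V E ends kind \<longleftrightarrow>
     (\<exists>Bblack Bblue. Bblack \<subseteq> E \<and> Bblue \<subseteq> E \<and> Bblack \<inter> Bblue = {} \<and>
        (\<forall>e\<in>Bblack. kind e = Diffusive) \<and>
        (\<forall>e\<in>Bblue. kind e = BlueSolid \<or> kind e = Diffusive) \<and>
        contains_spanning_tree V Bblack ends \<and> contains_spanning_tree V Bblue ends)"

definition redundant ::
  "'v set \<Rightarrow> 'e set \<Rightarrow> ('e \<Rightarrow> 'v \<times> 'v) \<Rightarrow> ('e \<Rightarrow> edge_kind) \<Rightarrow> 'e \<Rightarrow> bool" where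
  "redundant V E ends kind e \<longleftrightarrow> e \<in> E \<and> kind e = BlueSolid \<and>
     doubly_connected V E ends kind \<and> doubly_connected V (E - {e}) ends kind"

end

theory Submission
  imports Defs
begin

lemma connects_mono_rel:
  assumes "connects V F ends"
    and "\<And>e u v. e \<in> F \<Longrightarrow> joins ends e u v \<Longrightarrow> (adj F' ends')\<^sup>*\<^sup>* u v"
  shows "connects V F' ends'"
proof -
  have "adj F ends \<le> (adj F' ends')\<^sup>*\<^sup>*"
    using assms(2) unfolding adj_def by blast
  hence "(adj F ends)\<^sup>*\<^sup>* \<le> ((adj F' ends')\<^sup>*\<^sup>*)\<^sup>*\<^sup>*" by (rule rtranclp_mono)
  hence "(adj F ends)\<^sup>*\<^sup>* \<le> (adj F' ends')\<^sup>*\<^sup>*" by simp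
  thus ?thesis using assms(1) unfolding connects_def by blast
qed

lemma cst_imp_connects:
  assumes "contains_spanning_tree V F ends" shows "connects V F ends"
proof -
  obtain T where "T \<subseteq> F" "connects V T ends"
    using assms unfolding contains_spanning_tree_def spanning_tree_def by blast
  show ?thesis
  proof (rule connects_mono_rel[OF \<open>connects V T ends\<close>])
    fix e u v assume "e \<in> T" "joins ends e u v"
    hence "adj F ends u v" using \<open>T \<subseteq> F\<close> unfolding adj_def by blast
    thus "(adj F ends)\<^sup>*\<^sup>* u v" by (rule r_into_rtranclp)
  qed
qed

lemma connects_imp_cst:
  "finite F \<Longrightarrow> connects V F ends \<Longrightarrow> contains_spanning_tree V F ends"
proof (induction "card F" arbitrary: F rule: less_induct)
  case less
  show ?case
  proof (cases "spanning_tree V F ends")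
    case True thus ?thesis unfolding contains_spanning_tree_def by blast
  next
    case False
    then obtain e where e: "e \<in> F" "connects V (F - {e}) ends"
      using less.prems unfolding spanning_tree_def by blast
    have "card (F - {e}) < card F" using e less.prems by (meson card_Diff1_less)
    hence "contains_spanning_tree V (F - {e}) ends"
      using less e by auto
    thus ?thesis unfolding contains_spanning_tree_def by blast
  qed
qed

lemma connects_transfer:
  assumes "connects V S ends" "S \<subseteq> E0" "joins ends b M1 M2" "b1 \<notin> E0" "b2 \<notin> E0" "b1 \<noteq> b2"
  shows "connects V (if b \<in> S then S - {b} \<union> {b1, b2} else S) (ends(b1 := (M1, M), b2 := (M, M2)))"
proof (rule connects_mono_rel[OF assms(1)])
  fix e u v assume e: "e \<in> S" "joins ends e u v"
  let ?S = "(if b \<in> S then S - {b} \<union> {b1, b2} else S)"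
  let ?en = "ends(b1 := (M1, M), b2 := (M, M2))"
  show "(adj ?S ?en)\<^sup>*\<^sup>* u v"
  proof (cases "e = b")
    case True
    have a1: "adj ?S ?en M1 M" "adj ?S ?en M M1" using True e assms(6)
      by (auto simp: adj_def joins_def)
    have a2: "adj ?S ?en M M2" "adj ?S ?en M2 M" using True e assms(6)
      by (auto simp: adj_def joins_def)
    have "(u = M1 \<and> v = M2) \<or> (u = M2 \<and> v = M1)" using True e assms(3)
      by (auto simp: joins_def)
    thus ?thesis using a1 a2
      by (meson converse_rtranclp_into_rtranclp r_into_rtranclp)
  next
    case False
    have "e \<noteq> b1" "e \<noteq> b2" using e(1) assms(2,4,5) by blast+
    hence "adj ?S ?en u v" using False e by (auto simp: adj_def joins_def)
    thus ?thesis by blast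
  qed
qed

lemma dc_transfer:
  assumes "finite E0" "doubly_connected V E0 ends kind" "b \<in> E0" "kind b = Diffusive"
    "joins ends b M1 M2" "b1 \<notin> E0" "b2 \<notin> E0" "b1 \<noteq> b2"
  shows "doubly_connected V (E0 - {b} \<union> {b1, b2}) (ends(b1 := (M1, M), b2 := (M, M2)))
           (kind(b1 := Diffusive, b2 := Diffusive))"
proof -
  obtain Bk Bu where B: "Bk \<subseteq> E0" "Bu \<subseteq> E0" "Bk \<inter> Bu = {}"
    "\<forall>e\<in>Bk. kind e = Diffusive" "\<forall>e\<in>Bu. kind e = BlueSolid \<or> kind e = Diffusive"
    "contains_spanning_tree V Bk ends" "contains_spanning_tree V Bu ends"
    using assms(2) unfolding doubly_connected_def by blast
  define f where "f S = (if b \<in> S then S - {b} \<union> {b1, b2} else S)" for S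
  let ?en = "ends(b1 := (M1, M), b2 := (M, M2))"
  have ck: "connects V (f Bk) ?en" unfolding f_def
    by (rule connects_transfer[OF cst_imp_connects[OF B(6)] B(1) assms(5-8)])
  have cu: "connects V (f Bu) ?en" unfolding f_def
    by (rule connects_transfer[OF cst_imp_connects[OF B(7)] B(2) assms(5-8)])
  have fin: "finite (f Bk)" "finite (f Bu)" using B assms(1) finite_subset
    unfolding f_def by auto
  have s1: "f Bk \<subseteq> E0 - {b} \<union> {b1, b2}" "f Bu \<subseteq> E0 - {b} \<union> {b1, b2}"
    using B(1,2) unfolding f_def by auto
  have s2: "f Bk \<inter> f Bu = {}"
    using B(1,2,3) assms(6,7) unfolding f_def by (auto split: if_splits)
  have s3: "\<forall>e\<in>f Bk. (kind(b1 := Diffusive, b2 := Diffusive)) e = Diffusive"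
    using B(4) unfolding f_def by (auto split: if_splits)
  have s4: "\<forall>e\<in>f Bu. (kind(b1 := Diffusive, b2 := Diffusive)) e = BlueSolid \<or>
      (kind(b1 := Diffusive, b2 := Diffusive)) e = Diffusive"
    using B(5) unfolding f_def by (auto split: if_splits)
  show ?thesis unfolding doubly_connected_def
    using s1 s2 s3 s4 connects_imp_cst[OF fin(1) ck] connects_imp_cst[OF fin(2) cu] by blast
qed

theorem claimA2:
  fixes V :: "'v set" and E :: "'e set" and ends :: "'e \<Rightarrow> 'v \<times> 'v"
    and kind :: "'e \<Rightarrow> edge_kind" and b0 b b1 b2 :: 'e and M1 M2 M :: 'v
  assumes "molecular_graph V E ends"
    and "doubly_connected V E ends kind"
    and "redundant V E ends kind b0"
    and "b \<in> E" and "kind b = Diffusive" and "joins ends b M1 M2"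
    and "M \<in> V" and "M \<noteq> M1" and "M \<noteq> M2"
    and "b1 \<notin> E" and "b2 \<notin> E" and "b1 \<noteq> b2"
  shows "redundant V ((E - {b}) \<union> {b1, b2})
           (ends(b1 := (M1, M), b2 := (M, M2)))
           (kind(b1 := Diffusive, b2 := Diffusive)) b0"
proof -
  have fin: "finite E" using assms(1) unfolding molecular_graph_def by blast
  have r: "b0 \<in> E" "kind b0 = BlueSolid" "doubly_connected V (E - {b0}) ends kind"
    using assms(3) unfolding redundant_def by auto
  have ne: "b0 \<noteq> b" "b0 \<noteq> b1" "b0 \<noteq> b2" using r assms(5,10,11) by auto
  have d1: "doubly_connected V (E - {b} \<union> {b1, b2}) (ends(b1 := (M1, M), b2 := (M, M2)))
           (kind(b1 := Diffusive, b2 := Diffusive))"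
    by (rule dc_transfer[OF fin assms(2,4,5,6,10,11,12)])
  have d2: "doubly_connected V ((E - {b0}) - {b} \<union> {b1, b2}) (ends(b1 := (M1, M), b2 := (M, M2)))
           (kind(b1 := Diffusive, b2 := Diffusive))"
    by (rule dc_transfer[OF _ r(3)]) (use fin assms(4,5,6,10,11,12) ne in auto)
  have eq: "(E - {b0}) - {b} \<union> {b1, b2} = (E - {b} \<union> {b1, b2}) - {b0}" using ne by auto
  show ?thesis unfolding redundant_def using d1 d2 eq r ne by auto
qed

end
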